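(* Let $\vec G=(G,\alpha,w)$ be a finite magnetic graph with vertex set $V$, and let $V_1\subseteq V_0\subseteq V$, $a\in\mathbb{N}$. Then the spectrum of the $a$-th frame member of $\vec G^+_{V_1}$ identified along $V_0$ satisfies $$\operatorname{spec}\big(F_a(\vec G^+_{V_1},V_0)\big)=\operatorname{spec}\big(\vec G^+_{V_1}\big)\uplus\operatorname{spec}\big(\vec G^+_{V_0}\big)^{(a-1)}.$$
   Context: A graph $G=(V,E,\partial)$: finite disjoint sets $V,E$, incidence $\partial e=(\partial_-e,\partial_+e)\in V\times V$, inversion $e\mapsto \bar e$ with $\bar{\bar e}=e$, $\bar e\ne e$, $\partial_\pm\bar e=\partial_\mp e$; loops and multiple edges allowed; $E_v=\{e:\partial_-e=v\}$, $\deg v=|E_v|>0$. A magnetic graph $\vec G=(G,\alpha,w)$ has weights $w:E\to(0,\infty)$ with $w_{\bar e}=w_e$ and magnetic potential $\alpha:E\to\mathbb{R}/2\pi\mathbb{Z}$ with $\alpha_{\bar e}=-\alpha_e$; $\deg^w v=\sum_{e\in E_v}w_e$. The magnetic Laplacian on $\ell^2(V,\deg^w)$ (inner product $\langle f,g\rangle=\sum_v f(v)\overline{g(v)}\deg^w v$) is $(\Delta f)(v)=f(v)-\frac1{\deg^w v}\sum_{e\in E_v}w_e e^{i\alpha_e}f(\partial_+e)$. For $W\subseteq V$, the Dirichlet Laplacian is $\Delta^+_W=\iota_W^*\Delta\iota_W$ where $\iota_W:\ell^2(V\setminus W,\deg^w)\to\ell^2(V,\deg^w)$ extends by $0$; $\vec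 G^+_W$ denotes $\vec G$ with the vertices $W$ virtualised, and $\operatorname{spec}(\vec G^+_W)$ is the multiset of eigenvalues of $\Delta^+_W$ (with multiplicity); $\operatorname{spec}(\vec G)=\operatorname{spec}(\vec G^+_\emptyset)$. Frame member: $G^a$ is the disjoint union of $a$ copies $G\times\{j\}$, $j=1,\dots,a$; with $(v,i)\sim(v',j)$ iff $(v,i)=(v',j)$ or ($v=v'\in V_0$), $F_a(G,V_0)=G^a/\!\sim$ (vertices are classes, edges unchanged, incidence $e\mapsto([\partial_-e],[\partial_+e])$), and $F_a(\vec G,V_0)$ carries $w_{(e,j)}=w_e$, $\alpha_{(e,j)}=\alpha_e$. $F_a(\vec G^+_{V_1},V_0)$ is $F_a(\vec G,V_0)$ with the vertices $[(v_1,j)]$, $v_1\in V_1$, virtualised, i.e. its spectrum is that of the Dirichlet Laplacian of $F_a(\vec G,V_0)$ on these vertices. Multisets: $\uplus$ adds multiplicities; $M^{(k)}$ multiplies multiplicities by $k$ ($M^{(0)}$ is empty). *)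

theory Defs
  imports "Jordan_Normal_Form.Char_Poly" "HOL-Computational_Algebra.Polynomial"
begin

text \<open>A finite magnetic graph: vertices V, edges E, incidence (src, tgt) = (boundary_-, boundary_+),
  inversion flip, weights w, magnetic potential alpha (a real representative of an element of R/2piZ;
  only cis alpha enters the Laplacian, and the antisymmetry is required modulo 2pi).\<close>
definition magnetic_graph ::
  "'v set \<Rightarrow> 'e set \<Rightarrow> ('e \<Rightarrow> 'v) \<Rightarrow> ('e \<Rightarrow> 'v) \<Rightarrow> ('e \<Rightarrow> 'e) \<Rightarrow> ('e \<Rightarrow> real) \<Rightarrow> ('e \<Rightarrow> real) \<Rightarrow> bool"
where
  "magnetic_graph V E src tgt flip w \<alpha> \<longleftrightarrow>
     finite V \<and> finite E \<and>
     (\<forall>e\<in>E. src e \<in> V \<and> tgt e \<in> V \<and> flip e \<in> E \<and> flip (flip e) = e \<and> flip e \<noteq> e \<and>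
             src (flip e) = tgt e \<and> tgt (flip e) = src e \<and>
             w e > 0 \<and> w (flip e) = w e \<and> cis (\<alpha> (flip e)) = cis (- \<alpha> e)) \<and>
     (\<forall>v\<in>V. {e\<in>E. src e = v} \<noteq> {})"

definition wdeg :: "'e set \<Rightarrow> ('e \<Rightarrow> 'v) \<Rightarrow> ('e \<Rightarrow> real) \<Rightarrow> 'v \<Rightarrow> real" where
  "wdeg E src w v = (\<Sum>e\<in>{e\<in>E. src e = v}. w e)"

text \<open>Matrix coefficient of the magnetic Laplacian: (Delta f)(v) = sum_u lap_coeff v u * f u.\<close>
definition lap_coeff ::
  "'e set \<Rightarrow> ('e \<Rightarrow> 'v) \<Rightarrow> ('e \<Rightarrow> 'v) \<Rightarrow> ('e \<Rightarrow> real) \<Rightarrow> ('e \<Rightarrow> real) \<Rightarrow> 'v \<Rightarrow> 'v \<Rightarrow> complex"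
where
  "lap_coeff E src tgt w \<alpha> v u =
     (if v = u then 1 else 0)
     - (\<Sum>e\<in>{e\<in>E. src e = v \<and> tgt e = u}. complex_of_real (w e) * cis (\<alpha> e))
       / complex_of_real (wdeg E src w v)"

text \<open>Matrix of the Dirichlet Laplacian iota_W^* Delta iota_W w.r.t. the basis of indicator functions
  of V - W, enumerated by a (arbitrary) list; iota_W^* is restriction to V - W for the weighted
  inner product.\<close>
definition dirichlet_lap_mat ::
  "'v set \<Rightarrow> 'e set \<Rightarrow> ('e \<Rightarrow> 'v) \<Rightarrow> ('e \<Rightarrow> 'v) \<Rightarrow> ('e \<Rightarrow> real) \<Rightarrow> ('e \<Rightarrow> real) \<Rightarrow> 'v set \<Rightarrow> complex mat"
where
  "dirichlet_lap_mat V E src tgt w \<alpha> W =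
     (let xs = (SOME xs. distinct xs \<and> set xs = V - W)
      in mat (length xs) (length xs) (\<lambda>(i, j). lap_coeff E src tgt w \<alpha> (xs ! i) (xs ! j)))"

text \<open>spec of the graph with the vertices W virtualised: multiset of eigenvalues (with algebraic
  multiplicity) of the Dirichlet Laplacian.\<close>
definition dirichlet_spec ::
  "'v set \<Rightarrow> 'e set \<Rightarrow> ('e \<Rightarrow> 'v) \<Rightarrow> ('e \<Rightarrow> 'v) \<Rightarrow> ('e \<Rightarrow> real) \<Rightarrow> ('e \<Rightarrow> real) \<Rightarrow> 'v set \<Rightarrow> complex multiset"
where
  "dirichlet_spec V E src tgt w \<alpha> W = proots (char_poly (dirichlet_lap_mat V E src tgt w \<alpha> W))"

definition frame_rel :: "'v set \<Rightarrow> 'v set \<Rightarrow> nat \<Rightarrow> (('v \<times> nat) \<times> ('v \<times> nat)) set" where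
  "frame_rel V V0 a = {(x, y). x \<in> V \<times> {1..a} \<and> y \<in> V \<times> {1..a} \<and> (x = y \<or> (fst x = fst y \<and> fst x \<in> V0))}"

definition frame_cls :: "'v set \<Rightarrow> 'v set \<Rightarrow> nat \<Rightarrow> 'v \<times> nat \<Rightarrow> ('v \<times> nat) set" where
  "frame_cls V V0 a x = frame_rel V V0 a `` {x}"

definition frame_V :: "'v set \<Rightarrow> 'v set \<Rightarrow> nat \<Rightarrow> ('v \<times> nat) set set" where
  "frame_V V V0 a = (V \<times> {1..a}) // frame_rel V V0 a"

definition frame_E :: "'e set \<Rightarrow> nat \<Rightarrow> ('e \<times> nat) set" where
  "frame_E E a = E \<times> {1..a}"

definition frame_inc :: "'v set \<Rightarrow> 'v set \<Rightarrow> nat \<Rightarrow> ('e \<Rightarrow> 'v) \<Rightarrow> 'e \<times> nat \<Rightarrow> ('v \<times> nat) set" where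
  "frame_inc V V0 a s = (\<lambda>(e, j). frame_cls V V0 a (s e, j))"

definition frame_fun :: "('e \<Rightarrow> 'b) \<Rightarrow> 'e \<times> nat \<Rightarrow> 'b" where
  "frame_fun f = (\<lambda>(e, j). f e)"

definition frame_virt :: "'v set \<Rightarrow> 'v set \<Rightarrow> nat \<Rightarrow> 'v set \<Rightarrow> ('v \<times> nat) set set" where
  "frame_virt V V0 a V1 = {frame_cls V V0 a (v1, j) | v1 j. v1 \<in> V1 \<and> j \<in> {1..a}}"

definition frame_spec ::
  "'v set \<Rightarrow> 'e set \<Rightarrow> ('e \<Rightarrow> 'v) \<Rightarrow> ('e \<Rightarrow> 'v) \<Rightarrow> ('e \<Rightarrow> real) \<Rightarrow> ('e \<Rightarrow> real) \<Rightarrow> 'v set \<Rightarrow> 'v set \<Rightarrow> nat \<Rightarrow> complex multiset"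
where
  "frame_spec V E src tgt w \<alpha> V1 V0 a =
     dirichlet_spec (frame_V V V0 a) (frame_E E a) (frame_inc V V0 a src) (frame_inc V V0 a tgt)
       (frame_fun w) (frame_fun \<alpha>) (frame_virt V V0 a V1)"

definition mset_scale :: "nat \<Rightarrow> 'a multiset \<Rightarrow> 'a multiset" where
  "mset_scale k M = repeat_mset k M"

end

theory Submission
  imports Defs
begin


definition matof :: "'a list \<Rightarrow> ('a \<Rightarrow> 'a \<Rightarrow> 'c) \<Rightarrow> 'c mat" where
  "matof xs f = mat (length xs) (length xs) (\<lambda>(i,j). f (xs!i) (xs!j))"

lemma matof_carrier[simp]: "matof xs f \<in> carrier_mat (length xs) (length xs)"
  unfolding matof_def by simp

lemma matof_dim[simp]: "dim_row (matof xs f) = length xs" "dim_col (matof xs f) = length xs"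
  unfolding matof_def by simp_all

lemma matof_cong: "(\<And>x y. x \<in> set xs \<Longrightarrow> y \<in> set xs \<Longrightarrow> f x y = g x y) \<Longrightarrow> matof xs f = matof xs g"
  unfolding matof_def by (intro eq_matI) auto

lemma sum_nth_set: "distinct xs \<Longrightarrow> (\<Sum>l<length xs. g (xs!l)) = (\<Sum>y\<in>set xs. g y)"
  by (simp add: sum_list_distinct_conv_sum_set[symmetric] sum_list_sum_nth atLeast0LessThan)

lemma gensim:
  fixes xs :: "'a list" and ys :: "'b list" and m :: "'a \<Rightarrow> 'a \<Rightarrow> complex" and n :: "'b \<Rightarrow> 'b \<Rightarrow> complex"
  assumes dx: "distinct xs" and dy: "distinct ys" and len: "length xs = length ys"
  and PQ: "\<And>x x'. x \<in> set xs \<Longrightarrow> x' \<in> set xs \<Longrightarrow> (\<Sum>y\<in>set ys. p x y * q y x') = (if x = x' then 1 else 0)"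
  and MP: "\<And>x y. x \<in> set xs \<Longrightarrow> y \<in> set ys \<Longrightarrow> (\<Sum>x'\<in>set xs. m x x' * p x' y) = (\<Sum>y'\<in>set ys. p x y' * n y' y)"
  shows "char_poly (matof xs m) = char_poly (matof ys n)"
proof -
  define N where "N = length xs"
  define P where "P = mat N N (\<lambda>(i,j). p (xs!i) (ys!j))"
  define Q where "Q = mat N N (\<lambda>(i,j). q (ys!i) (xs!j))"
  have Pc: "P \<in> carrier_mat N N" and Qc: "Q \<in> carrier_mat N N" unfolding P_def Q_def by auto
  have M: "matof xs m \<in> carrier_mat N N" "matof ys n \<in> carrier_mat N N" using len N_def matof_carrier by metis+
  have PQ1: "P * Q = 1\<^sub>m N"
  proof (rule eq_matI)
    fix i j assume ij: "i < dim_row (1\<^sub>m N)" "j < dim_col (1\<^sub>m N)"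
    have "(P * Q) $$ (i,j) = (\<Sum>l<N. p (xs!i) (ys!l) * q (ys!l) (xs!j))"
      using ij len unfolding P_def Q_def by (simp add: scalar_prod_def atLeast0LessThan)
    also have "\<dots> = (\<Sum>y\<in>set ys. p (xs!i) y * q y (xs!j))"
      using sum_nth_set[OF dy, of "\<lambda>y. p (xs!i) y * q y (xs!j)"] len N_def by simp
    also have "\<dots> = (if i = j then 1 else 0)"
      using PQ[of "xs!i" "xs!j"] ij dx N_def by (simp add: nth_eq_iff_index_eq)
    finally show "(P * Q) $$ (i,j) = 1\<^sub>m N $$ (i,j)" using ij by simp
  qed (use Pc Qc in auto)
  have QP1: "Q * P = 1\<^sub>m N" using mat_mult_left_right_inverse[OF Pc Qc PQ1] .
  have MPe: "matof xs m * P = P * matof ys n"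
  proof (rule eq_matI)
    fix i j assume ij: "i < dim_row (P * matof ys n)" "j < dim_col (P * matof ys n)"
    hence ij': "i < N" "j < N" using Pc M by auto
    have "(matof xs m * P) $$ (i,j) = (\<Sum>l<N. m (xs!i) (xs!l) * p (xs!l) (ys!j))"
      using ij' len unfolding P_def matof_def N_def by (simp add: scalar_prod_def atLeast0LessThan)
    also have "\<dots> = (\<Sum>x'\<in>set xs. m (xs!i) x' * p x' (ys!j))"
      using sum_nth_set[OF dx, of "\<lambda>x'. m (xs!i) x' * p x' (ys!j)"] N_def by simp
    also have "\<dots> = (\<Sum>y'\<in>set ys. p (xs!i) y' * n y' (ys!j))"
      using MP ij' len N_def by simp
    also have "\<dots> = (\<Sum>l<N. p (xs!i) (ys!l) * n (ys!l) (ys!j))"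
      using sum_nth_set[OF dy, of "\<lambda>y'. p (xs!i) y' * n y' (ys!j)"] len N_def by simp
    also have "\<dots> = (P * matof ys n) $$ (i,j)"
      using ij' len unfolding P_def matof_def N_def by (simp add: scalar_prod_def atLeast0LessThan)
    finally show "(matof xs m * P) $$ (i,j) = (P * matof ys n) $$ (i,j)" .
  qed (use Pc M in auto)
  have "matof xs m = matof xs m * (P * Q)" using M PQ1 by (simp add: N_def)
  also have "\<dots> = (matof xs m * P) * Q" using M Pc Qc by (simp add: assoc_mult_mat)
  also have "\<dots> = P * matof ys n * Q" unfolding MPe ..
  finally have "similar_mat_wit (matof xs m) (matof ys n) P Q"
    by (intro similar_mat_witI[OF PQ1 QP1] M Pc Qc)
  hence "similar_mat (matof xs m) (matof ys n)" unfolding similar_mat_def by blast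
  thus ?thesis by (rule char_poly_similar)
qed

lemma cp_reindex:
  fixes f :: "'a \<Rightarrow> 'a \<Rightarrow> complex" and h :: "'b \<Rightarrow> 'a"
  assumes dx: "distinct xs" and dy: "distinct ys" and inj: "inj_on h (set ys)" and im: "h ` set ys = set xs"
  shows "char_poly (matof xs f) = char_poly (matof ys (\<lambda>u v. f (h u) (h v)))"
proof (rule gensim[where p = "\<lambda>x y. if x = h y then 1 else 0" and q = "\<lambda>y x. if h y = x then 1 else 0"])
  show "length xs = length ys"
    using distinct_card[OF dx] distinct_card[OF dy] card_image[OF inj] im by simp
next
  fix x x' assume x: "x \<in> set xs" "x' \<in> set xs"
  then obtain y0 where y0: "y0 \<in> set ys" "x = h y0" using im by auto
  have "(\<Sum>y\<in>set ys. (if x = h y then 1 else 0) * (if h y = x' then 1 else 0) :: complex)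
      = (\<Sum>y\<in>set ys. if y = y0 then (if x = x' then 1 else 0) else 0)"
    by (rule sum.cong) (use y0 inj in \<open>auto simp: inj_on_def\<close>)
  also have "\<dots> = (if x = x' then 1 else 0)" using y0 by simp
  finally show "(\<Sum>y\<in>set ys. (if x = h y then 1 else 0) * (if h y = x' then 1 else 0) :: complex) = (if x = x' then 1 else 0)" .
next
  fix x y assume xy: "x \<in> set xs" "y \<in> set ys"
  have "(\<Sum>x'\<in>set xs. f x x' * (if x' = h y then 1 else 0)) = (\<Sum>x'\<in>set xs. if x' = h y then f x (h y) else 0)"
    by (rule sum.cong) auto
  also have "\<dots> = f x (h y)" using xy im by auto
  also have "\<dots> = (\<Sum>y'\<in>set ys. if y' = (THE y'. y' \<in> set ys \<and> h y' = x) then f (h y') (h y) else 0)"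
  proof -
    obtain y0 where y0: "y0 \<in> set ys" "x = h y0" using im xy by auto
    have "(THE y'. y' \<in> set ys \<and> h y' = x) = y0"
      by (rule the_equality) (use y0 inj in \<open>auto simp: inj_on_def\<close>)
    thus ?thesis using y0 by simp
  qed
  also have "\<dots> = (\<Sum>y'\<in>set ys. (if x = h y' then 1 else 0) * f (h y') (h y))"
  proof (rule sum.cong)
    fix y' assume y': "y' \<in> set ys"
    obtain y0 where y0: "y0 \<in> set ys" "x = h y0" using im xy by auto
    have th: "(THE y'. y' \<in> set ys \<and> h y' = x) = y0"
      by (rule the_equality) (use y0 inj in \<open>auto simp: inj_on_def\<close>)
    show "(if y' = (THE y'. y' \<in> set ys \<and> h y' = x) then f (h y') (h y) else 0) = (if x = h y' then 1 else 0) * f (h y') (h y)"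
      unfolding th using y0 y' inj by (auto simp: inj_on_def)
  qed simp
  finally show "(\<Sum>x'\<in>set xs. f x x' * (if x' = h y then 1 else 0)) = (\<Sum>y'\<in>set ys. (if x = h y' then 1 else 0) * f (h y') (h y))" .
qed (use dx dy in auto)

lemma cp_append:
  fixes f :: "'a \<Rightarrow> 'a \<Rightarrow> complex"
  assumes z: "\<And>z y. z \<in> set zs \<Longrightarrow> y \<in> set ys \<Longrightarrow> f z y = 0"
  shows "char_poly (matof (ys @ zs) f) = char_poly (matof ys f) * char_poly (matof zs f)"
proof -
  let ?n = "length ys" and ?m = "length zs"
  define B where "B = mat ?n ?m (\<lambda>(i,j). f (ys!i) (zs!j))"
  have eq: "matof (ys @ zs) f = four_block_mat (matof ys f) B (0\<^sub>m ?m ?n) (matof zs f)"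
    by (rule eq_matI) (auto simp: matof_def B_def nth_append z)
  let ?cm = "\<lambda> A. [:0, 1:] \<cdot>\<^sub>m 1\<^sub>m (dim_row A) + map_mat (\<lambda>a. [:- a:]) A"
  have A1: "matof ys f \<in> carrier_mat ?n ?n" and A3: "matof zs f \<in> carrier_mat ?m ?m"
    and A2: "B \<in> carrier_mat ?n ?m" by (auto simp: B_def)
  let ?A = "four_block_mat (matof ys f) B (0\<^sub>m ?m ?n) (matof zs f)"
  have "char_poly ?A = det (?cm ?A)"
    unfolding char_poly_defs using A1 A3 by simp
  also have "?cm ?A = four_block_mat (?cm (matof ys f)) (map_mat (\<lambda>a. [:- a:]) B) (0\<^sub>m ?m ?n) (?cm (matof zs f))"
    by (rule eq_matI, insert A1 A2 A3, auto simp: one_poly_def)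
  also have "det \<dots> = det (?cm (matof ys f)) * det (?cm (matof zs f))"
    by (rule det_four_block_mat_lower_left_zero, insert A1 A2 A3, auto)
  also have "\<dots> = char_poly (matof ys f) * char_poly (matof zs f)" unfolding char_poly_defs ..
  finally show ?thesis unfolding eq .
qed

lemma cp_nil: "char_poly (matof [] (f :: 'a \<Rightarrow> 'a \<Rightarrow> complex)) = 1"
proof -
  have c: "matof [] f \<in> carrier_mat 0 0" using matof_carrier[of "[]" f] by simp
  from degree_monic_char_poly[OF c] show ?thesis
    by (metis degree0_coeffs coeff_pCons_0 one_pCons) 
qed

lemma cp_concat:
  fixes f :: "'a \<Rightarrow> 'a \<Rightarrow> complex"
  assumes "\<And>i j z y. i < j \<Longrightarrow> j < length bs \<Longrightarrow> z \<in> set (bs!j) \<Longrightarrow> y \<in> set (bs!i) \<Longrightarrow> f z y = 0"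
  shows "char_poly (matof (concat bs) f) = prod_list (map (\<lambda>b. char_poly (matof b f)) bs)"
  using assms
proof (induction bs)
  case Nil
  then show ?case using cp_nil by simp
next
  case (Cons b bs)
  have "char_poly (matof (b @ concat bs) f) = char_poly (matof b f) * char_poly (matof (concat bs) f)"
  proof (rule cp_append)
    fix z y assume "z \<in> set (concat bs)" "y \<in> set b"
    then obtain bj where "bj \<in> set bs" "z \<in> set bj" by auto
    then obtain j where "j < length bs" "z \<in> set (bs!j)" by (metis in_set_conv_nth)
    thus "f z y = 0" using Cons.prems[of 0 "Suc j" z y] \<open>y \<in> set b\<close> by simp
  qed
  moreover have "char_poly (matof (concat bs) f) = prod_list (map (\<lambda>b. char_poly (matof b f)) bs)"
    by (rule Cons.IH) (use Cons.prems[of "Suc _" "Suc _"] in auto)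
  ultimately show ?case by simp
qed



lemma sum_prod_fst:
  "finite A \<Longrightarrow> finite B \<Longrightarrow> (\<Sum>ej\<in>A \<times> B. g (fst ej)) = (of_nat (card B) :: 'b :: comm_semiring_1) * sum g A"
proof -
  have "(\<Sum>ej\<in>A \<times> B. g (fst ej)) = (\<Sum>e\<in>A. \<Sum>j\<in>B. g e)"
    by (simp only: sum.cartesian_product case_prod_unfold)
  also have "\<dots> = (\<Sum>e\<in>A. of_nat (card B) * g e)" by simp
  also have "\<dots> = of_nat (card B) * sum g A" by (rule sum_distrib_left[symmetric])
  finally show ?thesis .
qed

lemma frame_fun_fst: "frame_fun f = (\<lambda>ej. f (fst ej))"
  by (auto simp: frame_fun_def split_beta fun_eq_iff)

lemma frame_inc_fst: "frame_inc V V0 a s = (\<lambda>ej. frame_cls V V0 a (s (fst ej), snd ej))"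
  by (auto simp: frame_inc_def split_beta fun_eq_iff)

lemma cls_mem: "(y,k) \<in> frame_cls V V0 a (x,j) \<longleftrightarrow>
   (x \<in> V \<and> j \<in> {1..a}) \<and> (y \<in> V \<and> k \<in> {1..a}) \<and> ((x,j) = (y,k) \<or> (x = y \<and> x \<in> V0))"
  by (auto simp: frame_cls_def frame_rel_def)

lemma cls_eq:
  assumes "x \<in> V" "y \<in> V" "j \<in> {1..a}" "k \<in> {1..a}"
  shows "frame_cls V V0 a (x,j) = frame_cls V V0 a (y,k) \<longleftrightarrow> x = y \<and> (x \<in> V0 \<or> j = k)"
proof
  assume h: "frame_cls V V0 a (x,j) = frame_cls V V0 a (y,k)"
  have "(x,j) \<in> frame_cls V V0 a (x,j)" using assms by (simp add: cls_mem)
  hence "(x,j) \<in> frame_cls V V0 a (y,k)" using h by simp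
  thus "x = y \<and> (x \<in> V0 \<or> j = k)" by (auto simp: cls_mem)
next
  assume "x = y \<and> (x \<in> V0 \<or> j = k)"
  thus "frame_cls V V0 a (x,j) = frame_cls V V0 a (y,k)"
    using assms by (auto simp: set_eq_iff cls_mem)
qed

definition Sp :: "'v set \<Rightarrow> 'v set \<Rightarrow> 'v set \<Rightarrow> nat \<Rightarrow> ('v \<times> nat) set" where
  "Sp V V0 V1 a = (V0 - V1) \<times> {0} \<union> (V - V0) \<times> {1..a}"

definition hh :: "'v set \<Rightarrow> 'v set \<Rightarrow> nat \<Rightarrow> 'v \<times> nat \<Rightarrow> ('v \<times> nat) set" where
  "hh V V0 a p = frame_cls V V0 a (fst p, if snd p = 0 then 1 else snd p)"

definition TT :: "'e set \<Rightarrow> ('e \<Rightarrow> 'v) \<Rightarrow> ('e \<Rightarrow> 'v) \<Rightarrow> ('e \<Rightarrow> real) \<Rightarrow> ('e \<Rightarrow> real) \<Rightarrow> 'v \<Rightarrow> 'v \<Rightarrow> complex" where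
  "TT E src tgt w \<alpha> x y = (\<Sum>e\<in>{e\<in>E. src e = x \<and> tgt e = y}. complex_of_real (w e) * cis (\<alpha> e))
       / complex_of_real (wdeg E src w x)"

definition cc :: "nat \<Rightarrow> nat \<Rightarrow> nat \<Rightarrow> complex" where
  "cc a i k = (if i = 0 then (if k = 0 then 1 else 1 / of_nat a) else (if k = 0 \<or> k = i then 1 else 0))"

lemma lap_TT: "lap_coeff E src tgt w \<alpha> x y = (if x = y then 1 else 0) - TT E src tgt w \<alpha> x y"
  unfolding lap_coeff_def TT_def by simp

context
  fixes V :: "'v set" and E :: "'e set" and src tgt :: "'e \<Rightarrow> 'v" and flip :: "'e \<Rightarrow> 'e"
    and w \<alpha> :: "'e \<Rightarrow> real" and V0 V1 :: "'v set" and a :: nat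
  assumes mg: "magnetic_graph V E src tgt flip w \<alpha>"
    and V10: "V1 \<subseteq> V0" and V0V: "V0 \<subseteq> V"
    and a1: "a \<ge> 1"
begin

lemma finV: "finite V" and finE: "finite E" and srcV: "e \<in> E \<Longrightarrow> src e \<in> V" and tgtV: "e \<in> E \<Longrightarrow> tgt e \<in> V"
  using mg by (auto simp: magnetic_graph_def)

lemma cls_eq_c: "x \<in> V \<Longrightarrow> y \<in> V \<Longrightarrow> j \<in> {1..a} \<Longrightarrow> k \<in> {1..a} \<Longrightarrow>
  (frame_cls V V0 a (x,j) = frame_cls V V0 a (y,k)) = (x = y \<and> (x \<in> V0 \<or> j = k))"
  by (rule cls_eq)

lemma Sp_idx: "(x,i) \<in> Sp V V0 V1 a \<Longrightarrow> x \<in> V \<and> (if i = 0 then 1 else i) \<in> {1..a}"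
  using V0V a1 by (auto simp: Sp_def)

lemma hh_inj: "inj_on (hh V V0 a) (Sp V V0 V1 a)"
proof (rule inj_onI)
  fix p q assume p: "p \<in> Sp V V0 V1 a" and q: "q \<in> Sp V V0 V1 a" and e: "hh V V0 a p = hh V V0 a q"
  obtain x i y k where pq: "p = (x,i)" "q = (y,k)" by fastforce
  define i' where "i' = (if i = 0 then 1 else i)"
  define k' where "k' = (if k = 0 then 1 else k)"
  have e': "frame_cls V V0 a (x,i') = frame_cls V V0 a (y,k')"
    using e unfolding hh_def pq fst_conv snd_conv i'_def k'_def .
  have "x \<in> V" "i' \<in> {1..a}" using Sp_idx[of x i] p unfolding pq i'_def by simp_all
  moreover have "y \<in> V" "k' \<in> {1..a}" using Sp_idx[of y k] q unfolding pq k'_def by simp_all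
  ultimately have "x = y \<and> (x \<in> V0 \<or> i' = k')" using cls_eq_c e' by blast
  thus "p = q" using p q unfolding pq i'_def k'_def by (auto simp: Sp_def split: if_splits)
qed

lemma inc_eq:
  assumes p: "(x,i) \<in> Sp V V0 V1 a" and e: "e \<in> E" and j: "j \<in> {1..a}"
    and s: "s e \<in> V"
  shows "frame_inc V V0 a s (e,j) = hh V V0 a (x,i) \<longleftrightarrow> s e = x \<and> (i = 0 \<or> j = i)"
proof -
  define i' where "i' = (if i = 0 then 1 else i)"
  have "x \<in> V" "i' \<in> {1..a}" using Sp_idx[OF p] unfolding i'_def by simp_all
  hence "frame_inc V V0 a s (e,j) = hh V V0 a (x,i) \<longleftrightarrow> s e = x \<and> (s e \<in> V0 \<or> j = i')"
    unfolding frame_inc_def hh_def fst_conv snd_conv i'_def[symmetric] using cls_eq_c[OF s _ j] by simp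
  thus ?thesis using p V0V by (auto simp: Sp_def i'_def)
qed

lemma inc_eq':
  assumes p: "(x,i) \<in> Sp V V0 V1 a" and s: "\<And>e. e \<in> E \<Longrightarrow> s e \<in> V" and ej: "ej \<in> frame_E E a"
  shows "frame_inc V V0 a s ej = hh V V0 a (x,i) \<longleftrightarrow> s (fst ej) = x \<and> (i = 0 \<or> snd ej = i)"
proof -
  obtain e j where ej': "ej = (e,j)" by fastforce
  have "e \<in> E" "j \<in> {1..a}" using ej unfolding ej' frame_E_def by auto
  thus ?thesis using inc_eq[OF p _ _ s] unfolding ej' by simp
qed

lemma frame_coeff:
  assumes p: "(x,i) \<in> Sp V V0 V1 a" and q: "(y,k) \<in> Sp V V0 V1 a"
  shows "lap_coeff (frame_E E a) (frame_inc V V0 a src) (frame_inc V V0 a tgt) (frame_fun w) (frame_fun \<alpha>)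
           (hh V V0 a (x,i)) (hh V V0 a (y,k))
         = (if (x,i) = (y,k) then 1 else 0) - cc a i k * TT E src tgt w \<alpha> x y"
proof -
  define J where "J = {j\<in>{1..a}. (i = 0 \<or> j = i) \<and> (k = 0 \<or> j = k)}"
  define J' where "J' = {j\<in>{1..a}. i = 0 \<or> j = i}"
  have s1: "{ej \<in> frame_E E a. frame_inc V V0 a src ej = hh V V0 a (x,i) \<and> frame_inc V V0 a tgt ej = hh V V0 a (y,k)}
     = {e\<in>E. src e = x \<and> tgt e = y} \<times> J"
  proof (rule Set.set_eqI)
    fix ej :: "'e \<times> nat"
    show "ej \<in> {ej \<in> frame_E E a. frame_inc V V0 a src ej = hh V V0 a (x,i) \<and> frame_inc V V0 a tgt ej = hh V V0 a (y,k)}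
       \<longleftrightarrow> ej \<in> {e\<in>E. src e = x \<and> tgt e = y} \<times> J"
    proof (cases "ej \<in> frame_E E a")
      case True
      note A = inc_eq'[where s=src, OF p srcV True] and B = inc_eq'[where s=tgt, OF q tgtV True]
      have "ej \<in> {ej \<in> frame_E E a. frame_inc V V0 a src ej = hh V V0 a (x,i) \<and> frame_inc V V0 a tgt ej = hh V V0 a (y,k)}
        \<longleftrightarrow> ej \<in> frame_E E a \<and> (src (fst ej) = x \<and> (i = 0 \<or> snd ej = i)) \<and> (tgt (fst ej) = y \<and> (k = 0 \<or> snd ej = k))"
        by (simp only: mem_Collect_eq A B)
      thus ?thesis using True by (cases ej) (auto simp: J_def frame_E_def)
    next
      case False thus ?thesis unfolding J_def frame_E_def by auto
    qed
  qed
  have s2: "{ej \<in> frame_E E a. frame_inc V V0 a src ej = hh V V0 a (x,i)} = {e\<in>E. src e = x} \<times> J'"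
  proof (rule Set.set_eqI)
    fix ej :: "'e \<times> nat"
    show "ej \<in> {ej \<in> frame_E E a. frame_inc V V0 a src ej = hh V V0 a (x,i)}
       \<longleftrightarrow> ej \<in> {e\<in>E. src e = x} \<times> J'"
    proof (cases "ej \<in> frame_E E a")
      case True
      note A = inc_eq'[where s=src, OF p srcV True]
      have "ej \<in> {ej \<in> frame_E E a. frame_inc V V0 a src ej = hh V V0 a (x,i)}
        \<longleftrightarrow> ej \<in> frame_E E a \<and> (src (fst ej) = x \<and> (i = 0 \<or> snd ej = i))"
        by (simp only: mem_Collect_eq A)
      thus ?thesis using True by (cases ej) (auto simp: J'_def frame_E_def)
    next
      case False thus ?thesis unfolding J'_def frame_E_def by auto
    qed
  qed
  have fJ: "finite J" "finite J'" unfolding J_def J'_def by auto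
  have wd: "wdeg (frame_E E a) (frame_inc V V0 a src) (frame_fun w) (hh V V0 a (x,i)) = real (card J') * wdeg E src w x"
    unfolding wdeg_def s2 frame_fun_fst by (rule sum_prod_fst) (use finE fJ in auto)
  have sm: "(\<Sum>ej\<in>{ej \<in> frame_E E a. frame_inc V V0 a src ej = hh V V0 a (x,i) \<and> frame_inc V V0 a tgt ej = hh V V0 a (y,k)}.
        complex_of_real (frame_fun w ej) * cis (frame_fun \<alpha> ej))
      = of_nat (card J) * (\<Sum>e\<in>{e\<in>E. src e = x \<and> tgt e = y}. complex_of_real (w e) * cis (\<alpha> e))"
    unfolding s1 frame_fun_fst by (rule sum_prod_fst[where g = "\<lambda>e. complex_of_real (w e) * cis (\<alpha> e)"]) (use finE fJ in auto)
  have hq: "hh V V0 a (x,i) = hh V V0 a (y,k) \<longleftrightarrow> (x,i) = (y,k)"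
    using hh_inj p q by (auto simp: inj_on_def)
  have ccv: "cc a i k = of_nat (card J) / of_nat (card J')"
  proof -
    have ik: "i = 0 \<or> i \<in> {1..a}" "k = 0 \<or> k \<in> {1..a}" using p q by (auto simp: Sp_def)
    have "J' = (if i = 0 then {1..a} else {i})" unfolding J'_def using ik by auto
    moreover have "J = (if i = 0 then (if k = 0 then {1..a} else {k}) else (if k = 0 \<or> k = i then {i} else {}))"
      unfolding J_def using ik by auto
    ultimately show ?thesis unfolding cc_def using a1 by auto
  qed
  show ?thesis
    unfolding lap_coeff_def sm wd hq ccv TT_def by simp
qed


lemma sum_ind_r: fixes g :: "_ \<Rightarrow> complex" shows "finite S \<Longrightarrow> (\<Sum>q\<in>S. g q * (if R q then 1 else 0)) = sum g (S \<inter> {q. R q})"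
  by (simp add: sum.inter_restrict) (rule sum.cong, auto)

lemma sum_ind_l: fixes g :: "_ \<Rightarrow> complex" shows "finite S \<Longrightarrow> (\<Sum>q\<in>S. (if R q then 1 else 0) * g q) = sum g (S \<inter> {q. R q})"
  by (simp add: sum.inter_restrict) (rule sum.cong, auto)

lemma sum_single_prod: "sum g ({y} \<times> B) = (\<Sum>l\<in>B. g (y,l))"
proof -
  have "{y} \<times> B = (\<lambda>l. (y,l)) ` B" by auto
  moreover have "inj_on (\<lambda>l. (y,l)) B" by (auto simp: inj_on_def)
  ultimately show ?thesis by (simp add: sum.reindex)
qed

lemma finSp: "finite (Sp V V0 V1 a)"
  using finV V0V unfolding Sp_def by (auto intro: finite_subset)

lemma sum_mF_col:
  assumes p: "(x,i) \<in> Sp V V0 V1 a" and y: "y \<in> V - V0"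
  shows "(\<Sum>l\<in>{1..a}. (if (x,i) = (y,l) then 1 else 0) - cc a i l * TT E src tgt w \<alpha> x y)
     = (if i = 0 then - TT E src tgt w \<alpha> x y else lap_coeff E src tgt w \<alpha> x y)"
proof (cases "i = 0")
  case True
  hence "x \<noteq> y" using p y by (auto simp: Sp_def)
  hence "(\<Sum>l\<in>{1..a}. (if (x,i) = (y,l) then 1 else 0) - cc a i l * TT E src tgt w \<alpha> x y)
     = (\<Sum>l\<in>{1..a}. - (1 / of_nat a) * TT E src tgt w \<alpha> x y)"
    using True by (intro sum.cong) (auto simp: cc_def)
  also have "\<dots> = - TT E src tgt w \<alpha> x y" using a1 by simp
  finally show ?thesis using True by simp
next
  case False
  hence i: "i \<in> {1..a}" using p by (auto simp: Sp_def)
  have "(\<Sum>l\<in>{1..a}. (if (x,i) = (y,l) then 1 else 0) - cc a i l * TT E src tgt w \<alpha> x y)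
     = (\<Sum>l\<in>{1..a}. if l = i then lap_coeff E src tgt w \<alpha> x y else 0)"
    using False by (intro sum.cong) (auto simp: cc_def lap_TT)
  also have "\<dots> = lap_coeff E src tgt w \<alpha> x y" using i by simp
  finally show ?thesis using False by simp
qed

end

definition enum :: "'a set \<Rightarrow> 'a list" where
  "enum S = (SOME xs. distinct xs \<and> set xs = S)"

lemma enum: "finite S \<Longrightarrow> distinct (enum S) \<and> set (enum S) = S"
  unfolding enum_def by (rule someI_ex) (use finite_distinct_list in blast)

lemma dlm_matof: "dirichlet_lap_mat V E src tgt w \<alpha> W = matof (enum (V - W)) (lap_coeff E src tgt w \<alpha>)"
  unfolding dirichlet_lap_mat_def enum_def matof_def Let_def ..

lemma cp_nz: "char_poly (matof xs (f :: 'a \<Rightarrow> 'a \<Rightarrow> complex)) \<noteq> 0"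
  using degree_monic_char_poly[OF matof_carrier[of xs f]] by auto



context
  fixes V :: "'v set" and E :: "'e set" and src tgt :: "'e \<Rightarrow> 'v" and flip :: "'e \<Rightarrow> 'e"
    and w \<alpha> :: "'e \<Rightarrow> real" and V0 V1 :: "'v set" and a :: nat
  assumes mg: "magnetic_graph V E src tgt flip w \<alpha>"
    and V10: "V1 \<subseteq> V0" and V0V: "V0 \<subseteq> V"
    and a1: "a \<ge> 1"
begin

lemma main_cp:
  "char_poly (dirichlet_lap_mat (frame_V V V0 a) (frame_E E a) (frame_inc V V0 a src) (frame_inc V V0 a tgt)
       (frame_fun w) (frame_fun \<alpha>) (frame_virt V V0 a V1))
   = char_poly (dirichlet_lap_mat V E src tgt w \<alpha> V1) * char_poly (dirichlet_lap_mat V E src tgt w \<alpha> V0) ^ (a - 1)"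
proof -
  note ctx = mg V10 V0V a1
  have finV: "finite V" using finV[OF ctx] .
  define lap where "lap = lap_coeff E src tgt w \<alpha>"
  define T where "T = TT E src tgt w \<alpha>"
  define LF where "LF = lap_coeff (frame_E E a) (frame_inc V V0 a src) (frame_inc V V0 a tgt) (frame_fun w) (frame_fun \<alpha>)"
  define S where "S = Sp V V0 V1 a"
  define h where "h = hh V V0 a"
  define L0 where "L0 = enum (V0 - V1)"
  define L where "L = enum (V - V0)"
  have L0: "distinct L0" "set L0 = V0 - V1" unfolding L0_def using enum[of "V0 - V1"] finV V0V
    by (auto intro: finite_subset)
  have L: "distinct L" "set L = V - V0" unfolding L_def using enum[of "V - V0"] finV by auto
  define b0 where "b0 = map (\<lambda>u. (u, 0::nat)) L0 @ map (\<lambda>v. (v, 1)) L"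
  define bs where "bs = b0 # map (\<lambda>k. map (\<lambda>v. (v, k)) L) [2..<a+1]"
  define ys where "ys = concat bs"
  have setys: "set ys = S"
    unfolding ys_def bs_def b0_def S_def Sp_def using L0 L a1 by (auto simp: image_iff)
  have finS: "finite S" unfolding S_def by (rule finSp[OF ctx])
  have cardS: "card S = card (V0 - V1) + card (V - V0) * a"
  proof -
    have "card S = card ((V0 - V1) \<times> {0::nat}) + card ((V - V0) \<times> {1..a})"
      unfolding S_def Sp_def by (rule card_Un_disjoint) (use finV V0V in \<open>auto intro: finite_subset\<close>)
    thus ?thesis by (simp add: card_cartesian_product)
  qed
  have lenys: "length ys = length L0 + length L + (a - 1) * length L"
  proof -
    have "map (length \<circ> (\<lambda>k. map (\<lambda>v. (v, k)) L)) [2..<a+1] = replicate (a - 1) (length L)"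
      by (simp add: map_replicate_const o_def) linarith
    thus ?thesis unfolding ys_def bs_def b0_def by (simp add: length_concat sum_list_replicate)
  qed
  have dys: "distinct ys"
  proof (rule card_distinct)
    have "card (V0 - V1) = length L0" "card (V - V0) = length L"
      using distinct_card[OF L0(1)] distinct_card[OF L(1)] L0(2) L(2) by auto
    thus "card (set ys) = length ys" unfolding setys cardS lenys using a1
      by (simp add: algebra_simps)
  qed
  note ceq = cls_eq_c[OF ctx]
  have fV: "frame_V V V0 a = frame_cls V V0 a ` (V \<times> {1..a})"
    unfolding frame_V_def quotient_def frame_cls_def by auto
  have FS: "frame_V V V0 a - frame_virt V V0 a V1 = h ` S"
  proof (rule Set.set_eqI, rule iffI)
    fix X assume X: "X \<in> frame_V V V0 a - frame_virt V V0 a V1"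
    then obtain x j where xj: "x \<in> V" "j \<in> {1..a}" "X = frame_cls V V0 a (x,j)" unfolding fV by auto
    have xV1: "x \<notin> V1" using X xj unfolding frame_virt_def by auto
    show "X \<in> h ` S"
    proof (cases "x \<in> V0")
      case True
      have "X = h (x,0)" unfolding h_def hh_def xj(3) using ceq[OF xj(1) xj(1) xj(2), of 1] True a1 by simp
      moreover have "(x,0) \<in> S" unfolding S_def Sp_def using True xV1 by simp
      ultimately show ?thesis by blast
    next
      case False
      have "X = h (x,j)" unfolding h_def hh_def xj(3) using xj(2) by simp
      moreover have "(x,j) \<in> S" unfolding S_def Sp_def using False xj by simp
      ultimately show ?thesis by blast
    qed
  next
    fix X assume "X \<in> h ` S"
    then obtain x i where xi: "(x,i) \<in> S" "X = h (x,i)" by auto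
    define i' where "i' = (if i = 0 then 1 else i)"
    have xi': "x \<in> V" "i' \<in> {1..a}" using Sp_idx[OF ctx, of x i] xi(1) unfolding S_def i'_def by auto
    have X: "X = frame_cls V V0 a (x,i')" unfolding xi(2) h_def hh_def i'_def by simp
    have "x \<notin> V1" using xi(1) V10 unfolding S_def Sp_def by auto
    moreover have "X \<in> frame_virt V V0 a V1 \<Longrightarrow> x \<in> V1"
    proof -
      assume "X \<in> frame_virt V V0 a V1"
      then obtain v1 j where v: "v1 \<in> V1" "j \<in> {1..a}" "X = frame_cls V V0 a (v1,j)"
        unfolding frame_virt_def by auto
      have "v1 \<in> V" using v V10 V0V by auto
      from ceq[OF xi'(1) this xi'(2) v(2)] v(3) X have "x = v1" by simp
      thus "x \<in> V1" using v by simp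
    qed
    ultimately show "X \<in> frame_V V V0 a - frame_virt V V0 a V1" unfolding fV X using xi' by auto
  qed
  have finF: "finite (frame_V V V0 a - frame_virt V V0 a V1)" unfolding FS using finS by simp
  define xsF where "xsF = enum (frame_V V V0 a - frame_virt V V0 a V1)"
  have xsF: "distinct xsF" "set xsF = h ` S" using enum[OF finF] FS unfolding xsF_def by auto
  have c1: "char_poly (dirichlet_lap_mat (frame_V V V0 a) (frame_E E a) (frame_inc V V0 a src) (frame_inc V V0 a tgt)
       (frame_fun w) (frame_fun \<alpha>) (frame_virt V V0 a V1)) = char_poly (matof xsF LF)"
    unfolding dlm_matof xsF_def LF_def ..
  have c2: "char_poly (matof xsF LF) = char_poly (matof ys (\<lambda>p q. LF (h p) (h q)))"
    by (rule cp_reindex[OF xsF(1) dys]) (use hh_inj[OF ctx] xsF setys in \<open>auto simp: h_def S_def\<close>)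
  define mF where "mF = (\<lambda>p q. (if p = q then 1 else 0) - cc a (snd p) (snd q) * T (fst p) (fst q))"
  have c3: "matof ys (\<lambda>p q. LF (h p) (h q)) = matof ys mF"
  proof (rule matof_cong)
    fix p q assume "p \<in> set ys" "q \<in> set ys"
    hence "(fst p, snd p) \<in> Sp V V0 V1 a" "(fst q, snd q) \<in> Sp V V0 V1 a" using setys S_def by auto
    from frame_coeff[OF ctx this] show "LF (h p) (h q) = mF p q"
      unfolding LF_def h_def mF_def T_def by simp
  qed
  define Prel :: "'v \<times> nat \<Rightarrow> 'v \<times> nat \<Rightarrow> bool" where "Prel = (\<lambda>p q. fst p = fst q \<and> (snd p = snd q \<or> (2 \<le> snd p \<and> snd q = (1::nat))))"
  define P :: "'v \<times> nat \<Rightarrow> 'v \<times> nat \<Rightarrow> complex" where "P = (\<lambda>p q. if Prel p q then 1 else 0)"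
  define Q :: "'v \<times> nat \<Rightarrow> 'v \<times> nat \<Rightarrow> complex" where
    "Q = (\<lambda>p q. if fst p = fst q \<and> snd p = snd q then 1 else if fst p = fst q \<and> 2 \<le> snd p \<and> snd q = 1 then -1 else 0)"
  define N :: "'v \<times> nat \<Rightarrow> 'v \<times> nat \<Rightarrow> complex" where "N = (\<lambda>p q. if 2 \<le> snd p then (if snd q = snd p then lap (fst p) (fst q) else 0)
      else if 2 \<le> snd q then (if snd p = 0 then - T (fst p) (fst q) / of_nat a else 0) else lap (fst p) (fst q))"
  have rowset: "S \<inter> {q. Prel p q} = (if 2 \<le> snd p then {p, (fst p, 1)} else {p})" if p: "p \<in> S" for p
    using p a1 unfolding S_def Sp_def Prel_def by (cases p) auto
  have colset: "S \<inter> {q. Prel q r} = (if snd r = 1 then {fst r} \<times> {1..a} else {r})" if r: "r \<in> S" for r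
    using r a1 unfolding S_def Sp_def Prel_def by (cases r) auto
  have c4: "char_poly (matof ys mF) = char_poly (matof ys N)"
  proof (rule gensim[where p = P and q = Q, OF dys dys refl])
    fix p r assume pr: "p \<in> set ys" "r \<in> set ys"
    hence pr': "p \<in> S" "r \<in> S" using setys by auto
    have "(\<Sum>q\<in>set ys. P p q * Q q r) = sum (\<lambda>q. Q q r) (S \<inter> {q. Prel p q})"
      unfolding setys P_def using sum_ind_l[OF ctx finS] by simp
    also have "\<dots> = (if p = r then 1 else 0)"
      unfolding rowset[OF pr'(1)] by (cases p; cases r) (auto simp: Q_def)
    finally show "(\<Sum>q\<in>set ys. P p q * Q q r) = (if p = r then 1 else 0)" .
  next
    fix p r assume pr: "p \<in> set ys" "r \<in> set ys"
    hence pr': "p \<in> S" "r \<in> S" using setys by auto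
    obtain x i y k where pq: "p = (x,i)" "r = (y,k)" by fastforce
    have xi: "(i = 0 \<and> x \<in> V0 - V1) \<or> (x \<in> V - V0 \<and> i \<in> {1..a})" using pr'(1) unfolding pq S_def Sp_def by auto
    have yk: "(k = 0 \<and> y \<in> V0 - V1) \<or> (y \<in> V - V0 \<and> k \<in> {1..a})" using pr'(2) unfolding pq S_def Sp_def by auto
    have "(\<Sum>q\<in>set ys. mF p q * P q r) = sum (mF p) (S \<inter> {q. Prel q r})"
      unfolding setys P_def using sum_ind_r[OF ctx finS] by simp
    also have "\<dots> = (if k = 1 then (if i = 0 then - T x y else lap x y) else mF (x,i) (y,k))"
    proof (cases "k = 1")
      case True
      hence y: "y \<in> V - V0" using yk by auto
      have "sum (mF p) (S \<inter> {q. Prel q r}) = (\<Sum>l\<in>{1..a}. mF (x,i) (y,l))"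
        unfolding colset[OF pr'(2)] using True by (simp add: pq sum_single_prod[OF ctx])
      also have "\<dots> = (if i = 0 then - T x y else lap x y)"
        using sum_mF_col[OF ctx pr'(1)[unfolded pq S_def] y] unfolding mF_def T_def lap_def by simp
      finally show ?thesis using True by simp
    qed (use colset[OF pr'(2)] pq in simp)
    also have "\<dots> = (if 2 \<le> i then N (x,i) (y,k) + N (x,1) (y,k) else N (x,i) (y,k))"
      using xi yk by (auto simp: N_def mF_def cc_def lap_def lap_TT T_def)
    also have "\<dots> = sum (\<lambda>q. N q r) (S \<inter> {q. Prel p q})"
    proof -
      have rs: "S \<inter> {q. Prel p q} = (if 2 \<le> i then {(x,i),(x,1)} else {(x,i)})"
        using rowset[OF pr'(1)] pq by simp
      show ?thesis by (subst rs) (auto simp: pq)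
    qed
    also have "\<dots> = (\<Sum>q\<in>set ys. P p q * N q r)"
      unfolding setys P_def using sum_ind_l[OF ctx finS] by simp
    finally show "(\<Sum>q\<in>set ys. mF p q * P q r) = (\<Sum>q\<in>set ys. P p q * N q r)" .
  qed
  have lenbs: "length bs = a" unfolding bs_def using a1 by simp linarith
  have blk: "(j = 0 \<longrightarrow> snd q \<le> 1) \<and> (0 < j \<longrightarrow> snd q = j + 1)" if "j < length bs" "q \<in> set (bs!j)" for j q
  proof (cases j)
    case 0 thus ?thesis using that unfolding bs_def b0_def by auto
  next
    case (Suc j')
    have "j' < length [2..<a+1]" using that lenbs Suc unfolding bs_def by (simp del: upt_Suc)
    hence "bs ! j = map (\<lambda>v. (v, j + 1)) L" using Suc unfolding bs_def by (simp del: upt_Suc add: nth_upt)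
    thus ?thesis using that Suc by auto
  qed
  have c5: "char_poly (matof ys N) = prod_list (map (\<lambda>b. char_poly (matof b N)) bs)"
    unfolding ys_def
  proof (rule cp_concat)
    fix i j z y assume ij: "i < j" "j < length bs" "z \<in> set (bs!j)" "y \<in> set (bs!i)"
    have "snd z = j + 1" using blk[OF ij(2,3)] ij(1) by simp
    moreover have "snd y < j + 1"
    proof (cases "i = 0")
      case True
      have "bs \<noteq> []" unfolding bs_def by simp
      hence "snd y \<le> 1" using blk[of i y] ij True by simp
      thus ?thesis using ij(1) by simp
    next
      case False thus ?thesis using blk[of i y] ij by simp
    qed
    ultimately show "N z y = 0" unfolding N_def using ij(1) by auto
  qed
  have blkk: "char_poly (matof (map (\<lambda>v. (v, k)) L) N) = char_poly (matof L lap)" if k: "k \<in> set [2..<a+1]" for k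
  proof -
    have "char_poly (matof L lap) = char_poly (matof (map (\<lambda>v. (v, k)) L) (\<lambda>u v. lap (fst u) (fst v)))"
      by (rule cp_reindex) (use L(1) in \<open>auto simp: distinct_map inj_on_def image_image\<close>)
    also have "matof (map (\<lambda>v. (v, k)) L) (\<lambda>u v. lap (fst u) (fst v)) = matof (map (\<lambda>v. (v, k)) L) N"
      by (rule matof_cong) (use k in \<open>auto simp: N_def\<close>)
    finally show ?thesis by simp
  qed
  have c6: "prod_list (map (\<lambda>b. char_poly (matof b N)) bs) = char_poly (matof b0 N) * char_poly (matof L lap) ^ (a - 1)"
  proof -
    have "map (\<lambda>b. char_poly (matof b N)) (map (\<lambda>k. map (\<lambda>v. (v, k)) L) [2..<a+1])
        = map (\<lambda>k. char_poly (matof L lap)) [2..<a+1]"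
      using blkk by simp
    also have "\<dots> = replicate (a - 1) (char_poly (matof L lap))" by (simp add: map_replicate_const) linarith
    finally show ?thesis unfolding bs_def by simp
  qed
  have dL0L: "distinct (L0 @ L)" using L0 L V10 by auto
  have c7: "char_poly (matof b0 N) = char_poly (matof (L0 @ L) lap)"
  proof -
    have "char_poly (matof (L0 @ L) lap) = char_poly (matof b0 (\<lambda>u v. lap (fst u) (fst v)))"
      by (rule cp_reindex[OF dL0L]) (use L0 L in \<open>auto simp: b0_def distinct_map inj_on_def image_image image_Un\<close>)
    also have "matof b0 (\<lambda>u v. lap (fst u) (fst v)) = matof b0 N"
      by (rule matof_cong) (auto simp: N_def b0_def)
    finally show ?thesis by simp
  qed
  have c8: "char_poly (dirichlet_lap_mat V E src tgt w \<alpha> V1) = char_poly (matof (L0 @ L) lap)"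
  proof -
    have e: "distinct (enum (V - V1)) \<and> set (enum (V - V1)) = V - V1" using enum[of "V - V1"] finV by auto
    have "char_poly (matof (enum (V - V1)) lap) = char_poly (matof (L0 @ L) (\<lambda>u v. lap (id u) (id v)))"
      by (rule cp_reindex) (use e dL0L L0 L V10 V0V in auto)
    thus ?thesis unfolding dlm_matof lap_def by simp
  qed
  have c9: "char_poly (dirichlet_lap_mat V E src tgt w \<alpha> V0) = char_poly (matof L lap)"
    unfolding dlm_matof L_def lap_def ..
  show ?thesis unfolding c1 c2 c3 c4 c5 c6 c7 c8 c9 ..
qed

end

theorem proposition4p5:
  fixes V :: "'v set" and E :: "'e set" and src tgt :: "'e \<Rightarrow> 'v" and flip :: "'e \<Rightarrow> 'e"
    and w \<alpha> :: "'e \<Rightarrow> real" and V0 V1 :: "'v set" and a :: nat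
  assumes "magnetic_graph V E src tgt flip w \<alpha>"
    and "V1 \<subseteq> V0" and "V0 \<subseteq> V"
    and "a \<ge> 1"
  shows "frame_spec V E src tgt w \<alpha> V1 V0 a
         = dirichlet_spec V E src tgt w \<alpha> V1 + mset_scale (a - 1) (dirichlet_spec V E src tgt w \<alpha> V0)"
proof -
  have nz1: "char_poly (dirichlet_lap_mat V E src tgt w \<alpha> V1) \<noteq> 0" unfolding dlm_matof by (rule cp_nz)
  have nz0: "char_poly (dirichlet_lap_mat V E src tgt w \<alpha> V0) \<noteq> 0" unfolding dlm_matof by (rule cp_nz)
  hence nz0': "char_poly (dirichlet_lap_mat V E src tgt w \<alpha> V0) ^ (a - 1) \<noteq> 0" by simp
  show ?thesis
    unfolding frame_spec_def dirichlet_spec_def mset_scale_def main_cp[OF assms]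
    by (subst proots_mult[OF nz1 nz0'], subst proots_power, rule refl)
qed

end
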